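(* Let $\alpha\in(0,1]$, $0\le a<b$, and let $f:[a,b]\to\mathbb{R}$ be $\alpha$-fractional differentiable such that $D_\alpha f$ is increasing and $f$ is decreasing on $[a,b]$. Then $$ f\left(\frac{a+b}{2}\right)\le\frac{\alpha}{b^\alpha-a^\alpha}\int_a^b f(s)\,d_\alpha s\le f(b)+f(a)-f\left(\frac{a+b}{2}\right). $$
   Context: The conformable $\alpha$-fractional derivative is $D_\alpha f(t):=\lim_{\varepsilon\to 0}\frac{f(t+\varepsilon t^{1-\alpha})-f(t)}{\varepsilon}$ for $t>0$, $D_\alpha f(0):=\lim_{t\to0^+}D_\alpha f(t)$. Integrals: $\int_a^b h(s)\,d_\alpha s:=\int_a^b h(s)s^{\alpha-1}\,ds$. *)

theory Defs
  imports "HOL-Analysis.Analysis"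
begin

definition conf_has_deriv_within ::
  "real \<Rightarrow> (real \<Rightarrow> real) \<Rightarrow> real \<Rightarrow> real \<Rightarrow> real set \<Rightarrow> bool" where
  "conf_has_deriv_within \<alpha> f L t S \<longleftrightarrow>
     ((\<lambda>\<epsilon>. (f (t + \<epsilon> * t powr (1 - \<alpha>)) - f t) / \<epsilon>) \<longlongrightarrow> L)
       (at 0 within {\<epsilon>. t + \<epsilon> * t powr (1 - \<alpha>) \<in> S})"

definition conf_deriv_on ::
  "real \<Rightarrow> (real \<Rightarrow> real) \<Rightarrow> (real \<Rightarrow> real) \<Rightarrow> real \<Rightarrow> real \<Rightarrow> bool" where
  "conf_deriv_on \<alpha> f Df a b \<longleftrightarrow>
     (\<forall>t\<in>{a..b}. 0 < t \<longrightarrow> conf_has_deriv_within \<alpha> f (Df t) t {a..b}) \<and>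
     (0 \<in> {a..b} \<longrightarrow> (Df \<longlongrightarrow> Df 0) (at_right 0))"

definition conf_integral :: "real \<Rightarrow> real \<Rightarrow> real \<Rightarrow> (real \<Rightarrow> real) \<Rightarrow> real" where
  "conf_integral \<alpha> a b h = integral {a..b} (\<lambda>s. h s * s powr (\<alpha> - 1))"

end

theory Submission
  imports Defs
begin

lemma conf_to_deriv:
  fixes f :: "real \<Rightarrow> real"
  assumes t: "0 < t" and c: "conf_has_deriv_within \<alpha> f L t S"
  shows "(f has_real_derivative L * t powr (\<alpha> - 1)) (at t within S)"
proof -
  define c where "c = t powr (1 - \<alpha>)"
  have cpos: "c > 0" using t by (simp add: c_def)
  have Lc: "L * t powr (\<alpha> - 1) = L / c"
  proof -
    have "t powr (\<alpha> - 1) = inverse c"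
      unfolding c_def by (metis minus_diff_eq powr_minus)
    then show ?thesis by (simp add: divide_inverse)
  qed
  have H: "\<forall>e>0. \<exists>d>0. \<forall>x\<in>{\<epsilon>. t + \<epsilon> * c \<in> S}. 0 < dist x 0 \<and> dist x 0 < d \<longrightarrow>
             dist ((f (t + x * c) - f t) / x) L < e"
    using c unfolding conf_has_deriv_within_def Lim_within c_def by blast
  show ?thesis
    unfolding has_field_derivative_iff Lim_within Lc
  proof (intro allI impI)
    fix e :: real assume e: "e > 0"
    then obtain d where d: "d > 0" and dH: "\<And>x. t + x * c \<in> S \<Longrightarrow> 0 < dist x 0 \<Longrightarrow> dist x 0 < d \<Longrightarrow>
             dist ((f (t + x * c) - f t) / x) L < e * c"
      using H cpos by (metis (no_types, lifting) mem_Collect_eq mult_pos_pos)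
    show "\<exists>\<delta>>0. \<forall>y\<in>S. 0 < dist y t \<and> dist y t < \<delta> \<longrightarrow> dist ((f y - f t) / (y - t)) (L / c) < e"
    proof (intro exI[of _ "d * c"] conjI ballI impI)
      show "d * c > 0" using d cpos by simp
      fix y assume y: "y \<in> S" and yd: "0 < dist y t \<and> dist y t < d * c"
      define x where "x = (y - t) / c"
      have yx: "t + x * c = y" using cpos by (simp add: x_def)
      have x0: "0 < dist x 0" using yd cpos by (simp add: x_def dist_real_def)
      have xd: "dist x 0 < d" using yd cpos
        by (simp add: x_def dist_real_def abs_divide pos_divide_less_eq)
      have xS: "t + x * c \<in> S" using yx y by simp
      have "dist ((f (t + x * c) - f t) / x) L < e * c" using dH[OF xS x0 xd] .
      moreover have "(f (t + x * c) - f t) / x = c * ((f y - f t) / (y - t))"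
      proof -
        have "y - t \<noteq> 0" using yd by (simp add: dist_real_def)
        have "(f (t + x * c) - f t) / x = (f y - f t) / ((y - t) / c)"
          unfolding yx by (simp add: x_def)
        also have "\<dots> = c * ((f y - f t) / (y - t))"
          using \<open>y - t \<noteq> 0\<close> cpos by (simp add: field_simps)
        finally show ?thesis .
      qed
      ultimately have "\<bar>c * ((f y - f t) / (y - t)) - L\<bar> < e * c" by (simp add: dist_real_def)
      moreover have "c * ((f y - f t) / (y - t)) - L = c * ((f y - f t) / (y - t) - L / c)"
        using cpos by (simp add: right_diff_distrib)
      ultimately have "c * \<bar>(f y - f t) / (y - t) - L / c\<bar> < e * c"
        using cpos by (simp add: abs_mult)
      then show "dist ((f y - f t) / (y - t)) (L / c) < e"
        using cpos by (simp add: dist_real_def mult.commute)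
    qed
  qed
qed

lemma powr_at_right_0: "((\<lambda>x::real. x powr \<alpha>) \<longlongrightarrow> 0) (at_right 0)" if "\<alpha> > 0"
  by (rule tendsto_zero_powrI[of "\<lambda>x. x" _ "\<lambda>_. \<alpha>"]) (auto simp: that eventually_at_right_less intro: tendsto_ident_at eventually_at_rightI[of 0 1])

lemma tangent:
  fixes \<alpha> a b t s :: real and f Df :: "real \<Rightarrow> real"
  assumes al: "0 < \<alpha>" and a0: "0 \<le> a" and ab: "a < b"
    and cd: "conf_deriv_on \<alpha> f Df a b"
    and mD: "mono_on {a..b} Df"
    and af: "antimono_on {a..b} f"
    and t1: "a < t" and t2: "t < b" and s1: "a \<le> s" and s2: "s \<le> b"
  shows "f t + Df t * (s powr \<alpha> - t powr \<alpha>) / \<alpha> \<le> f s"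
proof -
  have der: "(f has_real_derivative Df x * x powr (\<alpha> - 1)) (at x within {a..b})"
    if "x \<in> {a..b}" "0 < x" for x
    using conf_to_deriv cd that unfolding conf_deriv_on_def by blast
  define h where "h = (\<lambda>x. f x - Df t * x powr \<alpha> / \<alpha>)"
  have hderw: "(h has_real_derivative (Df x - Df t) * x powr (\<alpha> - 1)) (at x within {a..b})"
    if x: "x \<in> {a..b}" "0 < x" for x
  proof -
    have d2: "((\<lambda>x. x powr \<alpha>) has_real_derivative \<alpha> * x powr (\<alpha> - 1)) (at x within {a..b})"
      using has_real_derivative_powr[OF x(2)] has_field_derivative_at_within by blast
    have "(h has_real_derivative Df x * x powr (\<alpha> - 1) - Df t * (\<alpha> * x powr (\<alpha> - 1)) / \<alpha>) (at x within {a..b})"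
      unfolding h_def by (intro DERIV_diff DERIV_cdivide DERIV_cmult der x d2)
    moreover have "Df x * x powr (\<alpha> - 1) - Df t * (\<alpha> * x powr (\<alpha> - 1)) / \<alpha> = (Df x - Df t) * x powr (\<alpha> - 1)"
      using al by (simp add: field_simps)
    ultimately show ?thesis by simp
  qed
  have hder: "(h has_real_derivative (Df x - Df t) * x powr (\<alpha> - 1)) (at x)" if "a < x" "x < b" for x
    using hderw[of x] that a0 at_within_Icc_at[OF that] by simp
  have contOn: "continuous_on {u..v} h" if "0 < u" "a \<le> u" "v \<le> b" for u v
  proof -
    have "continuous (at x within {u..v}) h" if "x \<in> {u..v}" for x
    proof -
      have "continuous (at x within {a..b}) h"
        using hderw[of x] that \<open>0 < u\<close> \<open>a \<le> u\<close> \<open>v \<le> b\<close> DERIV_continuous by force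
      then show ?thesis
        by (rule continuous_within_subset) (use \<open>a \<le> u\<close> \<open>v \<le> b\<close> in auto)
    qed
    then show ?thesis by (simp add: continuous_on_eq_continuous_within)
  qed
  have conv: "f t + Df t * (y powr \<alpha> - t powr \<alpha>) / \<alpha> \<le> f y" if "h t \<le> h y" for y
    using that unfolding h_def by (simp add: diff_divide_distrib right_diff_distrib)
  have pos: "f t + Df t * (y powr \<alpha> - t powr \<alpha>) / \<alpha> \<le> f y" if y: "0 < y" "a \<le> y" "y \<le> b" for y
  proof (cases "t \<le> y")
    case True
    have "h t \<le> h y"
    proof (rule DERIV_nonneg_imp_increasing_open[of t y h, OF True])
      fix x assume x: "t < x" "x < y"
      have "Df t \<le> Df x" using mD t1 t2 x y by (intro mono_onD[OF mD]) auto
      then show "\<exists>z. (h has_real_derivative z) (at x) \<and> 0 \<le> z"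
        using hder[of x] x t1 y by (intro exI[of _ "(Df x - Df t) * x powr (\<alpha> - 1)"]) auto
    next
      show "continuous_on {t..y} h" using contOn[of t y] t1 a0 y by auto
    qed
    then show ?thesis by (rule conv)
  next
    case False
    have "h y \<ge> h t"
    proof (rule DERIV_nonpos_imp_decreasing_open[of y t h])
      show "y \<le> t" using False by simp
      fix x assume x: "y < x" "x < t"
      have "Df x \<le> Df t" using mD t1 t2 x y by (intro mono_onD[OF mD]) auto
      then show "\<exists>z. (h has_real_derivative z) (at x) \<and> z \<le> 0"
        using hder[of x] x t2 y
        by (intro exI[of _ "(Df x - Df t) * x powr (\<alpha> - 1)"]) (auto intro: mult_nonpos_nonneg)
    next
      show "continuous_on {y..t} h" using contOn[of y t] t2 y by auto
    qed
    then show ?thesis by (rule conv)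
  qed
  show ?thesis
  proof (cases "0 < s")
    case True
    then show ?thesis using pos s1 s2 by blast
  next
    case False
    then have s0: "s = 0" and aa: "a = 0" using s1 a0 by auto
    have tpos: "0 < t" using t1 a0 by linarith
    have lim: "((\<lambda>x. f t + Df t * (x powr \<alpha> - t powr \<alpha>) / \<alpha>) \<longlongrightarrow> f t + Df t * (0 - t powr \<alpha>) / \<alpha>) (at_right 0)"
      by (use al in \<open>intro tendsto_intros powr_at_right_0\<close>) auto
    have ev: "\<forall>\<^sub>F x in at_right 0. f t + Df t * (x powr \<alpha> - t powr \<alpha>) / \<alpha> \<le> f s"
    proof (rule eventually_at_rightI[of 0 t])
      fix x assume x: "x \<in> {0<..<t}"
      have "f t + Df t * (x powr \<alpha> - t powr \<alpha>) / \<alpha> \<le> f x" using pos[of x] x aa t2 by auto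
      also have "f x \<le> f s" using af x s0 aa t2 by (auto simp: monotone_on_def)
      finally show "f t + Df t * (x powr \<alpha> - t powr \<alpha>) / \<alpha> \<le> f s" .
    qed (rule tpos)
    have "f t + Df t * (0 - t powr \<alpha>) / \<alpha> \<le> f s"
      by (rule tendsto_le[OF _ tendsto_const lim ev]) simp
    then show ?thesis using s0 by simp
  qed
qed


lemma int_w:
  fixes \<alpha> a b :: real
  assumes al: "0 < \<alpha>" and a0: "0 \<le> a" and ab: "a \<le> b"
  shows "((\<lambda>s. s powr (\<alpha> - 1)) has_integral (b powr \<alpha> / \<alpha> - a powr \<alpha> / \<alpha>)) {a..b}"
proof (rule fundamental_theorem_of_calculus_interior[OF ab])
  show "continuous_on {a..b} (\<lambda>x. x powr \<alpha> / \<alpha>)"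
    using al a0 by (intro continuous_on_divide continuous_on_powr' continuous_on_id continuous_on_const) auto
  fix x assume x: "x \<in> {a<..<b}"
  then have x0: "0 < x" using a0 by auto
  have "((\<lambda>x. x powr \<alpha> / \<alpha>) has_real_derivative \<alpha> * x powr (\<alpha> - 1) / \<alpha>) (at x)"
    by (intro DERIV_cdivide has_real_derivative_powr x0)
  then have "((\<lambda>x. x powr \<alpha> / \<alpha>) has_real_derivative x powr (\<alpha> - 1)) (at x)"
    using al by simp
  then show "((\<lambda>x. x powr \<alpha> / \<alpha>) has_vector_derivative x powr (\<alpha> - 1)) (at x)"
    by (simp add: has_real_derivative_iff_has_vector_derivative)
qed

lemma int_pw:
  fixes \<alpha> a b :: real
  assumes al: "0 < \<alpha>" and a0: "0 \<le> a" and ab: "a \<le> b"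
  shows "((\<lambda>s. s powr \<alpha> * s powr (\<alpha> - 1)) has_integral
           (b powr \<alpha> * b powr \<alpha> / (2 * \<alpha>) - a powr \<alpha> * a powr \<alpha> / (2 * \<alpha>))) {a..b}"
proof (rule fundamental_theorem_of_calculus_interior[OF ab])
  show "continuous_on {a..b} (\<lambda>x. x powr \<alpha> * x powr \<alpha> / (2 * \<alpha>))"
    using al a0 by (intro continuous_on_divide continuous_on_mult continuous_on_powr' continuous_on_id continuous_on_const) auto
  fix x assume x: "x \<in> {a<..<b}"
  then have x0: "0 < x" using a0 by auto
  have "((\<lambda>x. x powr \<alpha> * x powr \<alpha> / (2 * \<alpha>)) has_real_derivative
      (x powr \<alpha> * (\<alpha> * x powr (\<alpha> - 1)) + \<alpha> * x powr (\<alpha> - 1) * x powr \<alpha>) / (2 * \<alpha>)) (at x)"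
    by (intro DERIV_cdivide DERIV_mult' has_real_derivative_powr x0)
  moreover have "(x powr \<alpha> * (\<alpha> * x powr (\<alpha> - 1)) + \<alpha> * x powr (\<alpha> - 1) * x powr \<alpha>) / (2 * \<alpha>)
      = x powr \<alpha> * x powr (\<alpha> - 1)"
    using al by (simp add: field_simps)
  ultimately have "((\<lambda>x. x powr \<alpha> * x powr \<alpha> / (2 * \<alpha>)) has_real_derivative x powr \<alpha> * x powr (\<alpha> - 1)) (at x)"
    by simp
  then show "((\<lambda>x. x powr \<alpha> * x powr \<alpha> / (2 * \<alpha>)) has_vector_derivative x powr \<alpha> * x powr (\<alpha> - 1)) (at x)"
    by (simp add: has_real_derivative_iff_has_vector_derivative)
qed


lemma powr_tangent_concave:
  fixes \<alpha> x m :: real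
  assumes al: "0 < \<alpha>" "\<alpha> \<le> 1" and x: "0 \<le> x" and m: "0 < m"
  shows "x powr \<alpha> \<le> m powr (\<alpha> - 1) * (\<alpha> * x + (1 - \<alpha>) * m)"
proof (cases "x = 0")
  case True
  then show ?thesis using al m by simp
next
  case False
  then have x0: "0 < x" using x by simp
  have Y: "x powr \<alpha> * m powr (1 - \<alpha>) \<le> \<alpha> * x + (1 - \<alpha>) * m"
    using Youngs_inequality_0[of \<alpha> "1 - \<alpha>" x m] al x0 m by simp
  have "m powr (\<alpha> - 1) * m powr (1 - \<alpha>) = 1"
    using m by (simp flip: powr_add)
  then have "x powr \<alpha> = m powr (\<alpha> - 1) * (x powr \<alpha> * m powr (1 - \<alpha>))"
    by (simp add: algebra_simps)
  also have "\<dots> \<le> m powr (\<alpha> - 1) * (\<alpha> * x + (1 - \<alpha>) * m)"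
    using Y by (intro mult_left_mono) auto
  finally show ?thesis .
qed

lemma powr_mid:
  fixes \<alpha> a b :: real
  assumes al: "0 < \<alpha>" "\<alpha> \<le> 1" and a0: "0 \<le> a" and ab: "a < b"
  shows "a powr \<alpha> + b powr \<alpha> \<le> 2 * ((a + b) / 2) powr \<alpha>"
proof -
  define m where "m = (a + b) / 2"
  have m: "0 < m" using a0 ab by (simp add: m_def)
  have "a powr \<alpha> + b powr \<alpha> \<le> m powr (\<alpha> - 1) * (\<alpha> * a + (1 - \<alpha>) * m) + m powr (\<alpha> - 1) * (\<alpha> * b + (1 - \<alpha>) * m)"
    using powr_tangent_concave[OF al _ m, of a] powr_tangent_concave[OF al _ m, of b] a0 ab by simp
  also have "\<dots> = 2 * (m powr (\<alpha> - 1) * m)"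
    by (simp add: m_def algebra_simps)
  also have "m powr (\<alpha> - 1) * m = m powr \<alpha>"
  proof -
    have "m powr (\<alpha> - 1) * m = m powr (\<alpha> - 1) * m powr 1" using m by simp
    also have "\<dots> = m powr \<alpha>" by (subst powr_add[symmetric]) simp
    finally show ?thesis .
  qed
  finally show ?thesis by (simp add: m_def)
qed

lemma chord_alg:
  fixes u v fa fb \<alpha> :: real
  assumes "0 < \<alpha>" "u < v"
  shows "(fa - (fb - fa) / (v - u) * u) * (v / \<alpha> - u / \<alpha>) + (fb - fa) / (v - u) * (v * v / (2 * \<alpha>) - u * u / (2 * \<alpha>))
       = (v / \<alpha> - u / \<alpha>) * ((fa + fb) / 2)"
proof -
  have S: "v * v / (2 * \<alpha>) - u * u / (2 * \<alpha>) = (v - u) * ((v + u) / (2 * \<alpha>))"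
    using assms by (simp add: field_simps)
  have "(fb - fa) / (v - u) * (v * v / (2 * \<alpha>) - u * u / (2 * \<alpha>)) = (fb - fa) / (v - u) * ((v - u) * ((v + u) / (2 * \<alpha>)))"
    by (simp only: S)
  also have "\<dots> = (fb - fa) * ((v + u) / (2 * \<alpha>))" using assms by simp
  finally have A: "(fb - fa) / (v - u) * (v * v / (2 * \<alpha>) - u * u / (2 * \<alpha>)) = (fb - fa) * ((v + u) / (2 * \<alpha>))" .
  have B: "(fb - fa) / (v - u) * u * (v / \<alpha> - u / \<alpha>) = (fb - fa) * u / \<alpha>"
    using assms by (simp add: field_simps)
  show ?thesis unfolding left_diff_distrib A B using assms by (simp add: field_simps)
qed

theorem mainTheorem9:
  fixes \<alpha> a b :: real and f Df :: "real \<Rightarrow> real"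
  assumes "0 < \<alpha>" and "\<alpha> \<le> 1"
    and "0 \<le> a" and "a < b"
    and "conf_deriv_on \<alpha> f Df a b"
    and "mono_on {a..b} Df"
    and "antimono_on {a..b} f"
  shows "f ((a + b) / 2) \<le> \<alpha> / (b powr \<alpha> - a powr \<alpha>) * conf_integral \<alpha> a b f \<and>
         \<alpha> / (b powr \<alpha> - a powr \<alpha>) * conf_integral \<alpha> a b f \<le> f b + f a - f ((a + b) / 2)"
proof -
  note al = assms(1) and al1 = assms(2) and a0 = assms(3) and ab = assms(4)
    and cd = assms(5) and mD = assms(6) and af = assms(7)
  note tan = tangent[OF al a0 ab cd mD af]
  define P where "P = (\<lambda>x::real. x powr \<alpha>)"
  define W where "W = b powr \<alpha> / \<alpha> - a powr \<alpha> / \<alpha>"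
  define I2 where "I2 = b powr \<alpha> * b powr \<alpha> / (2 * \<alpha>) - a powr \<alpha> * a powr \<alpha> / (2 * \<alpha>)"
  define J where "J = conf_integral \<alpha> a b f"
  define m where "m = (a + b) / 2"
  have Pab: "P a < P b" unfolding P_def using al a0 ab by (intro powr_less_mono2) auto
  have Wpos: "W > 0" using Pab al unfolding W_def P_def by (simp add: divide_strict_right_mono)
  have W_eq: "W = (P b - P a) / \<alpha>" unfolding W_def P_def by (simp add: diff_divide_distrib)
  have m1: "a < m" and m2: "m < b" using ab by (auto simp: m_def)
  have pm: "P a + P b \<le> 2 * P m" unfolding P_def m_def using powr_mid[OF al al1 a0 ab] .
  have hw: "((\<lambda>s. s powr (\<alpha> - 1)) has_integral W) {a..b}"
    unfolding W_def using int_w[OF al a0] ab by simp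
  have hpw: "((\<lambda>s. s powr \<alpha> * s powr (\<alpha> - 1)) has_integral I2) {a..b}"
    unfolding I2_def using int_pw[OF al a0] ab by simp
  have fint: "(\<lambda>s. f s * s powr (\<alpha> - 1)) integrable_on {a..b}"
  proof -
    have "mono_on {a..b} (\<lambda>x. - f x)" using af by (auto simp: monotone_on_def)
    then have "integrable (lebesgue_on {a..b}) (\<lambda>x. - f x)" by (rule integrable_mono_on)
    then have "(\<lambda>x. - f x) \<in> borel_measurable (lebesgue_on {a..b})" by (rule borel_measurable_integrable)
    then have "(\<lambda>x. - (- f x)) \<in> borel_measurable (lebesgue_on {a..b})" by (rule borel_measurable_uminus)
    then have meas: "f \<in> borel_measurable (lebesgue_on {a..b})" by simp
    have "f ` {a..b} \<subseteq> {f b..f a}" using af by (auto simp: monotone_on_def)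
    then have bnd: "bounded (f ` {a..b})" by (rule bounded_subset[OF bounded_closed_interval])
    have wabs: "(\<lambda>s. s powr (\<alpha> - 1)) absolutely_integrable_on {a..b}"
      by (rule nonnegative_absolutely_integrable_1[OF has_integral_integrable[OF hw]]) simp
    have "(\<lambda>s. f s * s powr (\<alpha> - 1)) absolutely_integrable_on {a..b}"
      by (rule absolutely_integrable_bounded_measurable_product_real[OF meas _ bnd wabs]) simp
    then show ?thesis by (simp add: absolutely_integrable_on_def)
  qed
  have J_def': "J = integral {a..b} (\<lambda>s. f s * s powr (\<alpha> - 1))"
    unfolding J_def conf_integral_def ..
  define q where "q = (P a + P b) / 2"
  define t where "t = q powr (1 / \<alpha>)"
  have q0: "0 < q" using Pab powr_ge_zero[of a \<alpha>] unfolding q_def P_def by (intro divide_pos_pos) linarith+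
  have Pt: "P t = q" unfolding P_def t_def using al q0 by (simp add: powr_powr)
  have t0: "0 \<le> t" unfolding t_def by simp
  have t1: "a < t"
  proof (rule ccontr)
    assume "\<not> a < t"
    then have "P t \<le> P a" unfolding P_def using t0 al by (intro powr_mono2) auto
    then show False using Pt Pab unfolding q_def by simp
  qed
  have t2: "t < b"
  proof (rule ccontr)
    assume "\<not> t < b"
    then have "P b \<le> P t" unfolding P_def using a0 ab al by (intro powr_mono2) auto
    then show False using Pt Pab unfolding q_def by simp
  qed
  have tm: "t \<le> m"
  proof (rule ccontr)
    assume "\<not> t \<le> m"
    then have "P m < P t" unfolding P_def using m1 a0 al by (intro powr_less_mono2) auto
    then show False using Pt pm unfolding q_def by simp
  qed
  have ftm: "f m \<le> f t" using af t1 tm m2 by (auto simp: monotone_on_def)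
  have lowI: "((\<lambda>s. (f t + Df t * (P s - P t) / \<alpha>) * s powr (\<alpha> - 1)) has_integral f t * W) {a..b}"
  proof -
    have "((\<lambda>s. (f t - Df t * q / \<alpha>) * s powr (\<alpha> - 1) + (Df t / \<alpha>) * (s powr \<alpha> * s powr (\<alpha> - 1)))
        has_integral (f t - Df t * q / \<alpha>) * W + (Df t / \<alpha>) * I2) {a..b}"
      by (intro has_integral_add has_integral_mult_right hw hpw)
    moreover have "(\<lambda>s. (f t - Df t * q / \<alpha>) * s powr (\<alpha> - 1) + (Df t / \<alpha>) * (s powr \<alpha> * s powr (\<alpha> - 1)))
        = (\<lambda>s. (f t + Df t * (P s - P t) / \<alpha>) * s powr (\<alpha> - 1))"
      using al by (auto simp: Pt[unfolded P_def] P_def field_simps)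
    moreover have "(f t - Df t * q / \<alpha>) * W + (Df t / \<alpha>) * I2 = f t * W"
      using al unfolding W_def I2_def q_def P_def by (simp add: field_simps)
    ultimately show ?thesis by simp
  qed
  have low: "f t * W \<le> J"
  proof -
    have "integral {a..b} (\<lambda>s. (f t + Df t * (P s - P t) / \<alpha>) * s powr (\<alpha> - 1))
          \<le> integral {a..b} (\<lambda>s. f s * s powr (\<alpha> - 1))"
    proof (rule integral_le[OF has_integral_integrable[OF lowI] fint])
      fix s assume s: "s \<in> {a..b}"
      then show "(f t + Df t * (P s - P t) / \<alpha>) * s powr (\<alpha> - 1) \<le> f s * s powr (\<alpha> - 1)"
        using tan[OF t1 t2, of s] unfolding P_def by (intro mult_right_mono) auto
    qed
    then show ?thesis using integral_unique[OF lowI] J_def' by simp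
  qed
  have chord: "f s \<le> f a + (f b - f a) * (P s - P a) / (P b - P a)" if s: "a \<le> s" "s \<le> b" for s
  proof (cases "s = a \<or> s = b")
    case True
    then show ?thesis using Pab by auto
  next
    case False
    then have s1: "a < s" and s2: "s < b" using s by auto
    define D where "D = Df s / \<alpha>"
    have T1: "f s + D * (P a - P s) \<le> f a" using tan[OF s1 s2, of a] ab unfolding D_def P_def by simp
    have T2: "f s + D * (P b - P s) \<le> f b" using tan[OF s1 s2, of b] ab unfolding D_def P_def by simp
    have Pas: "P a \<le> P s" and Psb: "P s \<le> P b"
      unfolding P_def using a0 s1 s2 al by (auto intro: powr_mono2)
    have e1: "(f s + D * (P a - P s)) * (P b - P s) \<le> f a * (P b - P s)"
      using T1 Psb by (intro mult_right_mono) auto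
    have e2: "(f s + D * (P b - P s)) * (P s - P a) \<le> f b * (P s - P a)"
      using T2 Pas by (intro mult_right_mono) auto
    have "f s * (P b - P a) \<le> f a * (P b - P s) + f b * (P s - P a)"
      using e1 e2 by (simp add: algebra_simps)
    then have "f s \<le> (f a * (P b - P s) + f b * (P s - P a)) / (P b - P a)"
      using Pab by (simp add: pos_le_divide_eq)
    also have "\<dots> = f a + (f b - f a) * (P s - P a) / (P b - P a)"
      using Pab by (simp add: field_simps)
    finally show ?thesis .
  qed
  define c2 where "c2 = (f b - f a) / (P b - P a)"
  define c1 where "c1 = f a - c2 * P a"
  have upI: "((\<lambda>s. (f a + (f b - f a) * (P s - P a) / (P b - P a)) * s powr (\<alpha> - 1)) has_integral W * ((f a + f b) / 2)) {a..b}"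
  proof -
    have "((\<lambda>s. c1 * s powr (\<alpha> - 1) + c2 * (s powr \<alpha> * s powr (\<alpha> - 1)))
        has_integral c1 * W + c2 * I2) {a..b}"
      by (intro has_integral_add has_integral_mult_right hw hpw)
    moreover have "(\<lambda>s. c1 * s powr (\<alpha> - 1) + c2 * (s powr \<alpha> * s powr (\<alpha> - 1)))
        = (\<lambda>s. (f a + (f b - f a) * (P s - P a) / (P b - P a)) * s powr (\<alpha> - 1))"
    proof (rule ext)
      fix s
      have h: "c2 * (P s - P a) = (f b - f a) * (P s - P a) / (P b - P a)" unfolding c2_def by simp
      have "c1 * s powr (\<alpha> - 1) + c2 * (s powr \<alpha> * s powr (\<alpha> - 1))
          = (f a + c2 * (P s - P a)) * s powr (\<alpha> - 1)"
        unfolding c1_def P_def by (simp add: algebra_simps)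
      also have "\<dots> = (f a + (f b - f a) * (P s - P a) / (P b - P a)) * s powr (\<alpha> - 1)"
        by (simp only: h)
      finally show "c1 * s powr (\<alpha> - 1) + c2 * (s powr \<alpha> * s powr (\<alpha> - 1))
          = (f a + (f b - f a) * (P s - P a) / (P b - P a)) * s powr (\<alpha> - 1)" .
    qed
    moreover have "c1 * W + c2 * I2 = W * ((f a + f b) / 2)"
      using chord_alg[OF al Pab, of "f a" "f b"] unfolding c1_def c2_def W_def I2_def P_def by simp
    ultimately show ?thesis by simp
  qed
  have up: "J \<le> W * ((f a + f b) / 2)"
  proof -
    have "integral {a..b} (\<lambda>s. f s * s powr (\<alpha> - 1))
          \<le> integral {a..b} (\<lambda>s. (f a + (f b - f a) * (P s - P a) / (P b - P a)) * s powr (\<alpha> - 1))"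
    proof (rule integral_le[OF fint has_integral_integrable[OF upI]])
      fix s assume s: "s \<in> {a..b}"
      then show "f s * s powr (\<alpha> - 1) \<le> (f a + (f b - f a) * (P s - P a) / (P b - P a)) * s powr (\<alpha> - 1)"
        using chord[of s] by (intro mult_right_mono) auto
    qed
    then show ?thesis using integral_unique[OF upI] J_def' by simp
  qed
  have fab: "f b \<le> f a" using af ab by (auto simp: monotone_on_def)
  have mid: "f m \<le> (f a + f b) / 2"
  proof -
    have lam: "1 / 2 \<le> (P m - P a) / (P b - P a)"
      using Pab pm by (simp add: pos_le_divide_eq)
    have "(f b - f a) * ((P m - P a) / (P b - P a)) \<le> (f b - f a) * (1 / 2)"
      using lam fab by (intro mult_left_mono_neg) auto
    then have "(f b - f a) * (P m - P a) / (P b - P a) \<le> (f b - f a) / 2" by simp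
    moreover have "f m \<le> f a + (f b - f a) * (P m - P a) / (P b - P a)" using chord[of m] m1 m2 by simp
    ultimately show ?thesis by argo
  qed
  have Q: "\<alpha> / (b powr \<alpha> - a powr \<alpha>) * J = J / W"
    using al Pab unfolding W_eq P_def by (simp add: field_simps)
  have L1: "f t \<le> J / W" using low Wpos by (simp add: pos_le_divide_eq)
  have U1: "J / W \<le> (f a + f b) / 2" using up Wpos by (simp add: pos_divide_le_eq mult.commute)
  show ?thesis
    unfolding J_def[symmetric] Q m_def[symmetric]
    using L1 U1 ftm mid by argo
qed

end
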